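(* Let $\pi$ be a finite projective plane of order $q$, and let $A=(\mathcal P,\mathcal L,\mathcal I)$ consist of a set $\mathcal P$ of points of $\pi$ and a set $\mathcal L$ of lines of $\pi$, with the incidence $\mathcal I$ inherited from $\pi$, forming a linear space. Assume there is an integer $n$ with $1<n\le q$ such that no point of $\mathcal P$ is incident with more than $n+1$ lines of $\mathcal L$. Then: (a) if $|\mathcal P|=n^2+n+1$, then either $|\mathcal L|=1$ or $A$ is a subplane of $\pi$; (b) if $|\mathcal P|>n^2+n+1$, then $|\mathcal L|=1$.
   Context: A finite projective plane of order $q$ has $q^2+q+1$ points and lines, $q+1$ points on each line and $q+1$ lines through each point; any two distinct points lie on a unique line and any two lines meet in a unique point. $A$ being a linear space means: any two distinct points of $\mathcal P$ lie on exactly one line of $\mathcal L$, and each line of $\mathcal L$ contains at least two points of $\mathcal P$. A subplane of $\pi$ is a projective plane $(\mathcal P_0,\mathcal L_0,\mathcal I_0)$ with $\mathcal P_0$ a set of points of $\pi$, $\mathcal L_0$ a set of lines of $\pi$, and $\mathcal I_0$ contained in the incidence of $\pi$ (i.e. with inherited incidence, any two points of $\mathcal P_0$ lie on a unique line of $\mathcal L_0$, any two lines of $\mathcal L_0$ meet in a unique point of $\mathcal P_0$, each line of $\mathcal L_0$ has at least three points of $\mathcal P_0$, and there are four points of $\mathcal P_0$ no three on a line of $\mathcal L_0$). *)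

theory Defs
  imports Main
begin

definition projective_plane_of_order ::
  "'p set \<Rightarrow> 'l set \<Rightarrow> ('p \<Rightarrow> 'l \<Rightarrow> bool) \<Rightarrow> nat \<Rightarrow> bool" where
  "projective_plane_of_order Pts Lns I q \<longleftrightarrow>
     finite Pts \<and> finite Lns \<and>
     card Pts = q^2 + q + 1 \<and> card Lns = q^2 + q + 1 \<and>
     (\<forall>l\<in>Lns. card {p\<in>Pts. I p l} = q + 1) \<and>
     (\<forall>p\<in>Pts. card {l\<in>Lns. I p l} = q + 1) \<and>
     (\<forall>p\<in>Pts. \<forall>p'\<in>Pts. p \<noteq> p' \<longrightarrow> (\<exists>!l. l \<in> Lns \<and> I p l \<and> I p' l)) \<and>
     (\<forall>l\<in>Lns. \<forall>l'\<in>Lns. l \<noteq> l' \<longrightarrow> (\<exists>!p. p \<in> Pts \<and> I p l \<and> I p l'))"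

definition linear_space ::
  "'p set \<Rightarrow> 'l set \<Rightarrow> ('p \<Rightarrow> 'l \<Rightarrow> bool) \<Rightarrow> bool" where
  "linear_space P0 L0 I \<longleftrightarrow>
     (\<forall>p\<in>P0. \<forall>p'\<in>P0. p \<noteq> p' \<longrightarrow> (\<exists>!l. l \<in> L0 \<and> I p l \<and> I p' l)) \<and>
     (\<forall>l\<in>L0. \<exists>p\<in>P0. \<exists>p'\<in>P0. p \<noteq> p' \<and> I p l \<and> I p' l)"

definition subplane ::
  "'p set \<Rightarrow> 'l set \<Rightarrow> 'p set \<Rightarrow> 'l set \<Rightarrow> ('p \<Rightarrow> 'l \<Rightarrow> bool) \<Rightarrow> bool" where
  "subplane P0 L0 Pts Lns I \<longleftrightarrow>
     P0 \<subseteq> Pts \<and> L0 \<subseteq> Lns \<and>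
     (\<forall>p\<in>P0. \<forall>p'\<in>P0. p \<noteq> p' \<longrightarrow> (\<exists>!l. l \<in> L0 \<and> I p l \<and> I p' l)) \<and>
     (\<forall>l\<in>L0. \<forall>l'\<in>L0. l \<noteq> l' \<longrightarrow> (\<exists>!p. p \<in> P0 \<and> I p l \<and> I p l')) \<and>
     (\<forall>l\<in>L0. \<exists>a\<in>P0. \<exists>b\<in>P0. \<exists>c\<in>P0. a \<noteq> b \<and> a \<noteq> c \<and> b \<noteq> c \<and> I a l \<and> I b l \<and> I c l) \<and>
     (\<exists>a\<in>P0. \<exists>b\<in>P0. \<exists>c\<in>P0. \<exists>d\<in>P0. distinct [a, b, c, d] \<and>
        (\<forall>l\<in>L0. card ({a, b, c, d} \<inter> {p. I p l}) \<le> 2))"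

end

theory Submission
  imports Defs
begin

lemma sum_eq_max:
  fixes f :: "'a \<Rightarrow> nat"
  assumes fin: "finite S" and le: "\<And>x. x \<in> S \<Longrightarrow> f x \<le> n" and cS: "card S \<le> m"
    and eq: "sum f S = m * n" and npos: "0 < n"
  shows "card S = m \<and> (\<forall>x\<in>S. f x = n)"
proof -
  have s1: "sum f S \<le> card S * n" using sum_bounded_above[of S f n] le by simp
  have "m * n \<le> card S * n" using s1 eq by simp
  hence cm: "card S = m" using cS npos by (meson le_antisym mult_le_cancel2)
  have "\<forall>x\<in>S. f x = n"
  proof
    fix x assume x: "x \<in> S"
    show "f x = n"
    proof (rule ccontr)
      assume "f x \<noteq> n"
      hence lt: "f x < n" using le x by (simp add: order_le_neq_trans)
      have "sum f S = f x + sum f (S - {x})" using fin x by (simp add: sum.remove)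
      also have "sum f (S - {x}) \<le> card (S - {x}) * n"
        using sum_bounded_above[of "S - {x}" f n] le by simp
      also have "card (S - {x}) = card S - 1" using fin x by simp
      finally have "sum f S < n + (card S - 1) * n" using lt by linarith
      moreover have "card S \<ge> 1" using fin x by (metis card_0_eq empty_iff less_one not_le)
      ultimately have "sum f S < card S * n"
        by (metis add.commute mult_Suc Suc_diff_1 less_le_trans order_refl One_nat_def Suc_le_eq)
      thus False using eq cm by simp
    qed
  qed
  thus ?thesis using cm by simp
qed

lemma three_elems:
  assumes "3 \<le> card S"
  shows "\<exists>a\<in>S. \<exists>b\<in>S. \<exists>c\<in>S. a \<noteq> b \<and> a \<noteq> c \<and> b \<noteq> c"
proof -
  from assms obtain a B where "S = insert a B" "a \<notin> B" "2 \<le> card B" "finite B"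
    using card_le_Suc_iff[of 2 S] by (auto simp: numeral_3_eq_3)
  moreover from \<open>2 \<le> card B\<close> obtain b C where "B = insert b C" "b \<notin> C" "1 \<le> card C"
    using card_le_Suc_iff[of 1 B] by (auto simp: numeral_2_eq_2)
  moreover from \<open>1 \<le> card C\<close> obtain c where "c \<in> C"
    by (metis card.empty card.infinite ex_in_conv not_one_le_zero)
  ultimately show ?thesis by auto
qed

lemma card4: "distinct [a,b,c,d] \<Longrightarrow> \<not>(P a \<and> P b \<and> P c) \<Longrightarrow> \<not>(P a \<and> P b \<and> P d) \<Longrightarrow>
  \<not>(P a \<and> P c \<and> P d) \<Longrightarrow> \<not>(P b \<and> P c \<and> P d) \<Longrightarrow> card ({a,b,c,d} \<inter> {x. P x}) \<le> 2"
  by (cases "P a"; cases "P b"; cases "P c"; cases "P d") (simp_all add: Int_insert_left card_insert_if)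

theorem lemma4p3:
  fixes Pts :: "'p set" and Lns :: "'l set" and I :: "'p \<Rightarrow> 'l \<Rightarrow> bool"
    and P0 :: "'p set" and L0 :: "'l set" and q n :: nat
  assumes plane: "projective_plane_of_order Pts Lns I q"
    and subP: "P0 \<subseteq> Pts" and subL: "L0 \<subseteq> Lns"
    and lin: "linear_space P0 L0 I"
    and n_bounds: "1 < n" "n \<le> q"
    and deg: "\<forall>p\<in>P0. card {l\<in>L0. I p l} \<le> n + 1"
  shows "(card P0 = n^2 + n + 1 \<longrightarrow> card L0 = 1 \<or> subplane P0 L0 Pts Lns I)
       \<and> (card P0 > n^2 + n + 1 \<longrightarrow> card L0 = 1)"
proof -
  define pts where "pts l = {p\<in>P0. I p l}" for l
  define lns where "lns p = {l\<in>L0. I p l}" for p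
  have fPts: "finite Pts" using plane unfolding projective_plane_of_order_def by (rule conjunct1)
  have fLns: "finite Lns" using plane unfolding projective_plane_of_order_def
    by (rule conjunct1[OF conjunct2])
  have finP: "finite P0" using fPts subP finite_subset by blast
  have finL: "finite L0" using fLns subL finite_subset by blast
  have finpts: "finite (pts l)" for l using finP unfolding pts_def by simp
  have finlns: "finite (lns p)" for p using finL unfolding lns_def by simp
  have L1: "\<forall>p\<in>P0. \<forall>p'\<in>P0. p \<noteq> p' \<longrightarrow> (\<exists>!l. l \<in> L0 \<and> I p l \<and> I p' l)"
    using lin unfolding linear_space_def by (rule conjunct1)
  have L2: "\<forall>l\<in>L0. \<exists>p\<in>P0. \<exists>p'\<in>P0. p \<noteq> p' \<and> I p l \<and> I p' l"
    using lin unfolding linear_space_def by (rule conjunct2)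
  have E1: "\<exists>!m. m \<in> L0 \<and> I x m \<and> I y m" if "x \<in> P0" "y \<in> P0" "x \<noteq> y" for x y
    using L1 that by blast
  have join: "\<exists>m. m \<in> L0 \<and> I x m \<and> I y m" if "x \<in> P0" "y \<in> P0" "x \<noteq> y" for x y
    using E1[OF that] by (rule ex1_implies_ex)
  have uniq: "m = m'" if "x \<in> P0" "y \<in> P0" "x \<noteq> y" "m \<in> L0" "m' \<in> L0"
      "I x m" "I y m" "I x m'" "I y m'" for x y m m'
    using E1[OF that(1-3)] that(4-9) by blast
  have two: "\<exists>p\<in>P0. \<exists>p'\<in>P0. p \<noteq> p' \<and> I p l \<and> I p' l" if "l \<in> L0" for l
    using L2 that by blast
  define J where "J x y = (THE m. m \<in> L0 \<and> I x m \<and> I y m)" for x y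
  have J: "J x y \<in> L0 \<and> I x (J x y) \<and> I y (J x y)" if "x \<in> P0" "y \<in> P0" "x \<noteq> y" for x y
    unfolding J_def by (rule theI'[OF E1[OF that]])
  have count: "card P0 = 1 + (\<Sum>l\<in>lns p. card (pts l) - 1)" if p: "p \<in> P0" for p
  proof -
    have U: "P0 - {p} = (\<Union>l\<in>lns p. pts l - {p})"
    proof
      show "P0 - {p} \<subseteq> (\<Union>l\<in>lns p. pts l - {p})"
      proof
        fix x assume x: "x \<in> P0 - {p}"
        hence "J p x \<in> lns p" "x \<in> pts (J p x) - {p}" using J[of p x] p
          unfolding lns_def pts_def by auto
        thus "x \<in> (\<Union>l\<in>lns p. pts l - {p})" by blast
      qed
    qed (auto simp: pts_def)
    have "card (P0 - {p}) = (\<Sum>l\<in>lns p. card (pts l - {p}))"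
      unfolding U
    proof (rule card_UN_disjoint)
      show "\<forall>i\<in>lns p. \<forall>j\<in>lns p. i \<noteq> j \<longrightarrow> (pts i - {p}) \<inter> (pts j - {p}) = {}"
      proof (intro ballI impI)
        fix i j assume ij: "i \<in> lns p" "j \<in> lns p" "i \<noteq> j"
        show "(pts i - {p}) \<inter> (pts j - {p}) = {}"
        proof (rule ccontr)
          assume "(pts i - {p}) \<inter> (pts j - {p}) \<noteq> {}"
          then obtain x where x: "x \<in> P0" "x \<noteq> p" "I x i" "I x j" unfolding pts_def by blast
          have "i = j" using uniq[of p x i j] x ij p unfolding lns_def by auto
          thus False using ij by simp
        qed
      qed
    qed (auto simp: finlns finpts)
    also have "\<dots> = (\<Sum>l\<in>lns p. card (pts l) - 1)"
      by (rule sum.cong) (auto simp: pts_def lns_def p)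
    finally show ?thesis using finP p
      by (metis Suc_diff_1 card_Diff_singleton card_gt_0_iff empty_iff plus_1_eq_Suc)
  qed
  have inj: "inj_on (J p) (pts l)" if "p \<in> P0" "l \<in> L0" "\<not> I p l" for p l
  proof
    fix x y assume xy: "x \<in> pts l" "y \<in> pts l" "J p x = J p y"
    show "x = y"
    proof (rule ccontr)
      assume "x \<noteq> y"
      have px: "p \<noteq> x" "p \<noteq> y" using that xy unfolding pts_def by auto
      have "J p x = l" using uniq[of x y "J p x" l] J[of p x] J[of p y] xy px \<open>x \<noteq> y\<close> that
        unfolding pts_def by auto
      thus False using J[of p x] px that xy unfolding pts_def by auto
    qed
  qed
  have img: "J p ` pts l \<subseteq> lns p" if "p \<in> P0" "\<not> I p l" for p l
    using J[of p] that unfolding pts_def lns_def by fastforce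
  have ptsle: "card (pts l) \<le> card (lns p)" if "p \<in> P0" "l \<in> L0" "\<not> I p l" for p l
    using card_inj_on_le[OF inj[OF that] img[of p l] finlns] that by simp
  show ?thesis
  proof (cases "card L0 = 1")
    case True thus ?thesis by simp
  next
    case False
    have off: "\<exists>p\<in>P0. \<not> I p l" if l: "l \<in> L0" for l
    proof (rule ccontr)
      assume "\<not> ?thesis"
      hence all: "\<forall>p\<in>P0. I p l" by blast
      have "L0 = {l}"
      proof
        show "L0 \<subseteq> {l}"
        proof
          fix m assume m: "m \<in> L0"
          obtain x y where "x \<in> P0" "y \<in> P0" "x \<noteq> y" "I x m" "I y m" using two[OF m] by blast
          thus "m \<in> {l}" using uniq[of x y m l] all m l by auto
        qed
      qed (use l in auto)
      thus False using False by simp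
    qed
    have lnsle: "card (lns p) \<le> n + 1" if "p \<in> P0" for p using deg that unfolding lns_def by blast
    have ptsle2: "card (pts l) \<le> n + 1" if lL: "l \<in> L0" for l
    proof -
      obtain p where p: "p \<in> P0" "\<not> I p l" using off[OF lL] by blast
      show ?thesis using ptsle[OF p(1) lL p(2)] lnsle[OF p(1)] by linarith
    qed
    have bound: "card P0 \<le> n^2 + n + 1 \<and> (card P0 = n^2 + n + 1 \<longrightarrow> card (lns p) = n + 1 \<and>
        (\<forall>l\<in>lns p. card (pts l) - 1 = n))" if p: "p \<in> P0" for p
    proof -
      have le: "card (pts l) - 1 \<le> n" if "l \<in> lns p" for l
        using ptsle2[of l] that unfolding lns_def by auto
      have "(\<Sum>l\<in>lns p. card (pts l) - 1) \<le> card (lns p) * n"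
        using sum_bounded_above[of "lns p" "\<lambda>l. card (pts l) - 1" n] le by simp
      also have "\<dots> \<le> (n + 1) * n" using lnsle[OF p] mult_le_mono1 by blast
      finally have s: "(\<Sum>l\<in>lns p. card (pts l) - 1) \<le> (n+1) * n" .
      have sq: "(n+1)*n = n^2 + n" by (simp add: power2_eq_square)
      have cP: "card P0 = 1 + (\<Sum>l\<in>lns p. card (pts l) - 1)" by (rule count[OF p])
      have "card P0 \<le> n^2 + n + 1" using s cP sq by linarith
      moreover have "card (lns p) = n + 1 \<and> (\<forall>l\<in>lns p. card (pts l) - 1 = n)"
        if "card P0 = n^2 + n + 1"
      proof -
        have "(\<Sum>l\<in>lns p. card (pts l) - 1) = (n+1)*n" using cP sq that by linarith
        from sum_eq_max[OF finlns le lnsle[OF p] this] n_bounds show ?thesis by simp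
      qed
      ultimately show ?thesis by blast
    qed
    have partb: "\<not> card P0 > n^2 + n + 1"
    proof
      assume gt: "card P0 > n^2 + n + 1"
      hence "P0 \<noteq> {}" by auto
      then obtain p where "p \<in> P0" by blast
      thus False using bound gt by fastforce
    qed
    have parta: "subplane P0 L0 Pts Lns I" if eq: "card P0 = n^2 + n + 1"
    proof -
      have degp: "card (lns p) = n + 1" if "p \<in> P0" for p using bound[OF that] eq by blast
      have ptsl: "card (pts l) = n + 1" if l: "l \<in> L0" for l
      proof -
        obtain p where p: "p \<in> P0" "I p l" using two[OF l] by blast
        hence "l \<in> lns p" using l unfolding lns_def by simp
        hence "card (pts l) - 1 = n" using bound[OF p(1)] eq by blast
        thus ?thesis using n_bounds by simp
      qed
      have meet: "\<exists>!x. x \<in> P0 \<and> I x l \<and> I x l'" if ll: "l \<in> L0" "l' \<in> L0" "l \<noteq> l'" for l l'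
      proof -
        have "\<exists>p\<in>P0. I p l \<and> \<not> I p l'"
        proof (rule ccontr)
          assume "\<not> ?thesis"
          moreover obtain x y where "x \<in> P0" "y \<in> P0" "x \<noteq> y" "I x l" "I y l"
            using two[OF ll(1)] by blast
          ultimately show False using uniq[of x y l l'] ll by blast
        qed
        then obtain p where p: "p \<in> P0" "I p l" "\<not> I p l'" by blast
        have "card (J p ` pts l') = card (lns p)"
          using card_image[OF inj[OF p(1) ll(2) p(3)]] ptsl[OF ll(2)] degp[OF p(1)] by simp
        hence "J p ` pts l' = lns p"
          using card_subset_eq[OF finlns img[OF p(1) p(3)]] by simp
        moreover have "l \<in> lns p" using ll p unfolding lns_def by simp
        ultimately obtain x where x: "x \<in> pts l'" "l = J p x" by auto
        have "x \<noteq> p" using x p unfolding pts_def by auto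
        hence "I x l" using J[of p x] x p unfolding pts_def by auto
        hence ex: "x \<in> P0 \<and> I x l \<and> I x l'" using x unfolding pts_def by simp
        show ?thesis using ex uniq ll by blast
      qed
      have three: "\<exists>a\<in>P0. \<exists>b\<in>P0. \<exists>c\<in>P0. a \<noteq> b \<and> a \<noteq> c \<and> b \<noteq> c \<and> I a l \<and> I b l \<and> I c l"
        if l: "l \<in> L0" for l
        using three_elems[of "pts l"] ptsl[OF l] n_bounds unfolding pts_def by auto
      have quad: "\<exists>a\<in>P0. \<exists>b\<in>P0. \<exists>c\<in>P0. \<exists>d\<in>P0. distinct [a, b, c, d] \<and>
        (\<forall>l\<in>L0. card ({a, b, c, d} \<inter> {p. I p l}) \<le> 2)"
      proof -
        have "card P0 \<ge> 2" using eq n_bounds by simp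
        then obtain x y where xy: "x \<in> P0" "y \<in> P0" "x \<noteq> y"
          using three_elems[of P0] eq n_bounds
          by (metis Suc_1 card_le_Suc_iff insert_iff less_Suc_eq_le nat_less_le numeral_2_eq_2)
        define l where "l = J x y"
        have l: "l \<in> L0" using J[OF xy] l_def by simp
        obtain a b where ab: "a \<in> P0" "b \<in> P0" "a \<noteq> b" "I a l" "I b l" using two[OF l] by blast
        obtain c where c: "c \<in> P0" "\<not> I c l" using off[OF l] by blast
        have ac: "a \<noteq> c" "b \<noteq> c" using ab c by auto
        define lac where "lac = J a c"
        define lbc where "lbc = J b c"
        have Lac: "lac \<in> L0" "I a lac" "I c lac" using J[of a c] ab c ac lac_def by auto
        have Lbc: "lbc \<in> L0" "I b lbc" "I c lbc" using J[of b c] ab c ac lbc_def by auto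
        define U where "U = pts l \<union> (pts lac - {a}) \<union> (pts lbc - {b, c})"
        have "card U \<le> card (pts l) + card (pts lac - {a}) + card (pts lbc - {b, c})"
          unfolding U_def by (meson card_Un_le add_le_mono le_refl order_trans)
        moreover have "card (pts lac - {a}) = n" using ptsl[OF Lac(1)] Lac ab unfolding pts_def
          by (simp add: finP)
        moreover have "card (pts lbc - {b, c}) = n - 1" using ptsl[OF Lbc(1)] Lbc ab c ac
          unfolding pts_def by (simp add: finP)
        ultimately have "card U \<le> 3 * n" using ptsl[OF l] n_bounds by simp
        moreover have "3 * n < n^2 + n + 1"
        proof -
          have "2 * n \<le> n * n" using n_bounds mult_le_mono1[of 2 n n] by simp
          thus ?thesis unfolding power2_eq_square by linarith
        qed
        ultimately have "card U < card P0" using eq by simp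
        moreover have "U \<subseteq> P0" unfolding U_def pts_def by auto
        ultimately have "\<not> P0 \<subseteq> U"
          using card_mono[of U P0] finite_subset[OF _ finP] by fastforce
        then obtain d where d: "d \<in> P0" "d \<notin> U" by blast
        have dl: "\<not> I d l" "\<not> I d lac" "\<not> I d lbc"
          using d ab c ac Lac Lbc unfolding U_def pts_def by auto
        have dist: "distinct [a, b, c, d]" using ab c ac dl Lac Lbc by auto
        have "card ({a, b, c, d} \<inter> {p. I p m}) \<le> 2" if m: "m \<in> L0" for m
        proof -
          have n1: "\<not> (I a m \<and> I b m \<and> I c m)" using uniq[of a b m l] ab c m l by auto
          have n2: "\<not> (I a m \<and> I b m \<and> I d m)" using uniq[of a b m l] ab dl m l by auto
          have n3: "\<not> (I a m \<and> I c m \<and> I d m)" using uniq[of a c m lac] ab c ac Lac dl m by auto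
          have n4: "\<not> (I b m \<and> I c m \<and> I d m)" using uniq[of b c m lbc] ab c ac Lbc dl m by auto
          show ?thesis using card4[OF dist, of "\<lambda>x. I x m"] n1 n2 n3 n4 by simp
        qed
        thus ?thesis using ab c d dist by blast
      qed
      have pj: "\<forall>p\<in>P0. \<forall>p'\<in>P0. p \<noteq> p' \<longrightarrow> (\<exists>!l. l \<in> L0 \<and> I p l \<and> I p' l)"
        by (rule L1)
      have mt: "\<forall>l\<in>L0. \<forall>l'\<in>L0. l \<noteq> l' \<longrightarrow> (\<exists>!p. p \<in> P0 \<and> I p l \<and> I p l')"
        using meet by blast
      have th: "\<forall>l\<in>L0. \<exists>a\<in>P0. \<exists>b\<in>P0. \<exists>c\<in>P0. a \<noteq> b \<and> a \<noteq> c \<and> b \<noteq> c \<and> I a l \<and> I b l \<and> I c l"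
        using three by blast
      show ?thesis unfolding subplane_def
        using subP subL pj mt th quad by (intro conjI)
    qed
    show ?thesis using parta partb by blast
  qed
qed

end
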